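(* Let $\Delta\subset\mathbb{S}^2$ be a planar flag complex satisfying the Standing Assumptions, and let $T$ be a finite tree encoding the structure of $\Delta$ in the following sense: (1) each vertex $v$ of $T$ is associated to a prime full subcomplex $\Delta_v$ of $\Delta$, with $\Delta_v\neq\Delta_{v'}$ for $v\neq v'$ and $\bigcup_{v}\Delta_v=\Delta$; (2) each edge $e$ of $T$ is associated to an induced 4-cycle $\Delta_e$ of $\Delta$, with $\Delta_e\neq\Delta_{e'}$ for $e\neq e'$; (3) vertices $v_1,v_2$ are the endpoints of an edge $e$ iff $\Delta_{v_1}\cap\Delta_{v_2}=\Delta_e$, and if $V_1,V_2$ are the vertex sets of the two components of $T$ minus the midpoint of $e$, then $(\bigcup_{v\in V_1}\Delta_v,\bigcup_{v\in V_2}\Delta_v)$ is a strong visual decomposition of $\Delta$ along $\Delta_e$. Then for each region $R$ of $\mathbb{S}^2-\Delta$ there is a vertex $v$ of $T$ such that $R$ is also a region of $\mathbb{S}^2-\Delta_v$.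
   Context: A flag complex is a simplicial complex in which every complete subgraph of the 1-skeleton spans a simplex; a subcomplex is full if it contains every simplex whose vertices lie in it. Standing Assumptions on $\Delta\subset\mathbb{S}^2$: (1) connected, no separating vertex, no separating edge, contains an induced 4-cycle; (2) not a 4-cycle and not a cone on a 4-cycle. An induced 4-cycle $\sigma$ strongly separates $\Delta$ if $\Delta$ meets both components $U_1,U_2$ of $\mathbb{S}^2-\sigma$; then with $\Delta_i$ equal to $\sigma$ together with the components of $\Delta-\sigma$ in $U_i$, the pair $(\Delta_1,\Delta_2)$ is the strong visual decomposition along $\sigma$. $\Delta$ is prime if it is connected with no separating vertex or edge, is not a 4-cycle but contains an induced 4-cycle, and has no strongly separating induced 4-cycle. A region of $\mathbb{S}^2-\Delta$ is a connected component. *)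

theory Defs
  imports "HOL-Analysis.Analysis"
begin

definition simplicial_complex :: "'v set set \<Rightarrow> bool" where
  "simplicial_complex K \<longleftrightarrow>
     (\<forall>s\<in>K. finite s \<and> s \<noteq> {}) \<and> (\<forall>s\<in>K. \<forall>t. t \<subseteq> s \<and> t \<noteq> {} \<longrightarrow> t \<in> K)"

definition verts :: "'v set set \<Rightarrow> 'v set" where
  "verts K = \<Union>K"

definition flag :: "'v set set \<Rightarrow> bool" where
  "flag K \<longleftrightarrow> (\<forall>S. finite S \<and> S \<noteq> {} \<and> S \<subseteq> verts K \<and>
       (\<forall>u\<in>S. \<forall>w\<in>S. u \<noteq> w \<longrightarrow> {u, w} \<in> K) \<longrightarrow> S \<in> K)"

definition induced :: "'v set set \<Rightarrow> 'v set \<Rightarrow> 'v set set" where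
  "induced K W = {s\<in>K. s \<subseteq> W}"

definition full_subcomplex :: "'v set set \<Rightarrow> 'v set set \<Rightarrow> bool" where
  "full_subcomplex K L \<longleftrightarrow> L \<subseteq> K \<and> L = induced K (verts L)"

definition is_4cycle :: "'v set set \<Rightarrow> bool" where
  "is_4cycle L \<longleftrightarrow> (\<exists>a b c d. distinct [a, b, c, d] \<and>
      L = {{a}, {b}, {c}, {d}, {a, b}, {b, c}, {c, d}, {d, a}})"

definition induced_4cycle :: "'v set set \<Rightarrow> 'v set set \<Rightarrow> bool" where
  "induced_4cycle K L \<longleftrightarrow> full_subcomplex K L \<and> is_4cycle L"

definition cone_on_4cycle :: "'v set set \<Rightarrow> bool" where
  "cone_on_4cycle K \<longleftrightarrow> (\<exists>c C. is_4cycle C \<and> c \<notin> verts C \<and>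
      K = C \<union> {insert c s | s. s \<in> C} \<union> {{c}})"

definition realization :: "('v::finite) set set \<Rightarrow> (real^'v) set" where
  "realization K = (\<Union>s\<in>K. convex hull ((\<lambda>i. axis i 1) ` s))"

definition complex_connected :: "('v::finite) set set \<Rightarrow> bool" where
  "complex_connected K \<longleftrightarrow> connected (realization K)"

definition has_separating_vertex :: "('v::finite) set set \<Rightarrow> bool" where
  "has_separating_vertex K \<longleftrightarrow>
     (\<exists>v\<in>verts K. \<not> complex_connected (induced K (verts K - {v})))"

definition has_separating_edge :: "('v::finite) set set \<Rightarrow> bool" where
  "has_separating_edge K \<longleftrightarrow>
     (\<exists>e\<in>K. card e = 2 \<and> \<not> complex_connected (induced K (verts K - e)))"

abbreviation S2 :: "(real^3) set" where
  "S2 \<equiv> sphere 0 1"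

definition planar_embedding :: "((real^'v) \<Rightarrow> real^3) \<Rightarrow> ('v::finite) set set \<Rightarrow> bool" where
  "planar_embedding h K \<longleftrightarrow> continuous_on (realization K) h \<and> inj_on h (realization K)
     \<and> h ` realization K \<subseteq> S2"

abbreviation img :: "((real^'v) \<Rightarrow> real^3) \<Rightarrow> ('v::finite) set set \<Rightarrow> (real^3) set" where
  "img h K \<equiv> h ` realization K"

definition strongly_separates ::
  "((real^'v) \<Rightarrow> real^3) \<Rightarrow> ('v::finite) set set \<Rightarrow> 'v set set \<Rightarrow> bool" where
  "strongly_separates h K \<sigma> \<longleftrightarrow> induced_4cycle K \<sigma> \<and>
     (\<exists>U1 U2. components (S2 - img h \<sigma>) = {U1, U2} \<and> U1 \<noteq> U2 \<and>
        img h K \<inter> U1 \<noteq> {} \<and> img h K \<inter> U2 \<noteq> {})"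

definition strong_visual_decomposition ::
  "((real^'v) \<Rightarrow> real^3) \<Rightarrow> ('v::finite) set set \<Rightarrow> 'v set set \<Rightarrow> 'v set set \<Rightarrow> 'v set set \<Rightarrow> bool" where
  "strong_visual_decomposition h K \<sigma> A B \<longleftrightarrow> induced_4cycle K \<sigma> \<and>
     (\<exists>U1 U2. components (S2 - img h \<sigma>) = {U1, U2} \<and> U1 \<noteq> U2 \<and>
        img h K \<inter> U1 \<noteq> {} \<and> img h K \<inter> U2 \<noteq> {} \<and>
        img h A = img h \<sigma> \<union> \<Union>{C \<in> components (img h K - img h \<sigma>). C \<subseteq> U1} \<and>
        img h B = img h \<sigma> \<union> \<Union>{C \<in> components (img h K - img h \<sigma>). C \<subseteq> U2})"

definition prime_complex :: "((real^'v) \<Rightarrow> real^3) \<Rightarrow> ('v::finite) set set \<Rightarrow> bool" where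
  "prime_complex h K \<longleftrightarrow> complex_connected K \<and> \<not> has_separating_vertex K \<and>
     \<not> has_separating_edge K \<and> \<not> is_4cycle K \<and> (\<exists>\<sigma>. induced_4cycle K \<sigma>) \<and>
     \<not> (\<exists>\<sigma>. strongly_separates h K \<sigma>)"

definition standing_assumptions :: "('v::finite) set set \<Rightarrow> bool" where
  "standing_assumptions K \<longleftrightarrow> complex_connected K \<and> \<not> has_separating_vertex K \<and>
     \<not> has_separating_edge K \<and> (\<exists>\<sigma>. induced_4cycle K \<sigma>) \<and>
     \<not> is_4cycle K \<and> \<not> cone_on_4cycle K"

definition gadj :: "'t set set \<Rightarrow> 't \<Rightarrow> 't \<Rightarrow> bool" where
  "gadj E u w \<longleftrightarrow> u \<noteq> w \<and> {u, w} \<in> E"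

definition reach :: "'t set set \<Rightarrow> 't \<Rightarrow> 't \<Rightarrow> bool" where
  "reach E = (gadj E)\<^sup>*\<^sup>*"

definition finite_tree :: "'t set \<Rightarrow> 't set set \<Rightarrow> bool" where
  "finite_tree V E \<longleftrightarrow> finite V \<and> V \<noteq> {} \<and>
     (\<forall>e\<in>E. \<exists>u w. e = {u, w} \<and> u \<noteq> w \<and> u \<in> V \<and> w \<in> V) \<and>
     (\<forall>u\<in>V. \<forall>w\<in>V. reach E u w) \<and>
     (\<forall>e\<in>E. \<forall>u w. e = {u, w} \<longrightarrow> \<not> reach (E - {e}) u w)"

definition side :: "'t set \<Rightarrow> 't set set \<Rightarrow> 't set \<Rightarrow> 't \<Rightarrow> 't set" where
  "side V E e u = {w\<in>V. reach (E - {e}) u w}"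

end

theory Submission
  imports Defs
begin

lemma gadj_sym: "gadj E u w \<Longrightarrow> gadj E w u"
  by (auto simp: gadj_def insert_commute)

lemma reach_sym: assumes "reach E u w" shows "reach E w u"
  using assms unfolding reach_def
proof (induction rule: rtranclp_induct)
  case base then show ?case by simp
next
  case (step y z) then show ?case by (meson converse_rtranclp_into_rtranclp gadj_sym)
qed

lemma reach_first:
  assumes "reach E v w"
  shows "w = v \<or> (\<exists>b. gadj E v b \<and> reach (E - {{v,b}}) b w)"
  using assms unfolding reach_def
proof (induction rule: rtranclp_induct)
  case base show ?case by simp
next
  case (step w w')
  from step.IH show ?case
  proof
    assume "w = v" with step.hyps(2) show ?thesis by auto
  next
    assume "\<exists>b. gadj E v b \<and> (gadj (E - {{v,b}}))\<^sup>*\<^sup>* b w"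
    then obtain b where b: "gadj E v b" "(gadj (E - {{v,b}}))\<^sup>*\<^sup>* b w" by blast
    show ?thesis
    proof (cases "{w,w'} = {v,b}")
      case True
      then have "(w = v \<and> w' = b) \<or> (w = b \<and> w' = v)" by (auto simp: doubleton_eq_iff)
      then show ?thesis using b by auto
    next
      case False
      then have "gadj (E - {{v,b}}) w w'" using step.hyps(2) by (auto simp: gadj_def)
      then show ?thesis using b by (meson rtranclp.rtrancl_into_rtrancl)
    qed
  qed
qed

lemma realization_mono: "K \<subseteq> L \<Longrightarrow> realization K \<subseteq> realization L"
  by (auto simp: realization_def)

lemma realization_UN: "realization (\<Union>i\<in>I. F i) = (\<Union>i\<in>I. realization (F i))"
  by (auto simp: realization_def)

theorem lemma4p15:
  fixes K :: "('v::finite) set set"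
    and h :: "real^'v \<Rightarrow> real^3"
    and VT :: "'t set" and ET :: "'t set set"
    and \<Delta>v :: "'t \<Rightarrow> 'v set set" and \<Delta>e :: "'t set \<Rightarrow> 'v set set"
  assumes cx: "simplicial_complex K" and fl: "flag K"
    and emb: "planar_embedding h K"
    and sa: "standing_assumptions K"
    and tree: "finite_tree VT ET"
    and vert_prime: "\<forall>v\<in>VT. full_subcomplex K (\<Delta>v v) \<and> prime_complex h (\<Delta>v v)"
    and vert_inj: "inj_on \<Delta>v VT"
    and vert_cover: "(\<Union>v\<in>VT. \<Delta>v v) = K"
    and edge_cyc: "\<forall>e\<in>ET. induced_4cycle K (\<Delta>e e)"
    and edge_inj: "inj_on \<Delta>e ET"
    and endpoints: "\<forall>v1\<in>VT. \<forall>v2\<in>VT. \<forall>e\<in>ET. e = {v1, v2} \<longleftrightarrow> \<Delta>v v1 \<inter> \<Delta>v v2 = \<Delta>e e"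
    and decomp: "\<forall>e\<in>ET. \<forall>v1 v2. e = {v1, v2} \<longrightarrow>
         strong_visual_decomposition h K (\<Delta>e e)
           (\<Union>v\<in>side VT ET e v1. \<Delta>v v) (\<Union>v\<in>side VT ET e v2. \<Delta>v v)"
  shows "\<forall>R\<in>components (S2 - img h K). \<exists>v\<in>VT. R \<in> components (S2 - img h (\<Delta>v v))"
proof
  fix R assume R: "R \<in> components (S2 - img h K)"
  obtain x0 where x0S: "x0 \<in> S2 - img h K" and Req: "R = connected_component_set (S2 - img h K) x0"
    by (rule componentsE[OF R])
  have x0: "x0 \<in> R" using Req x0S by auto
  have Rconn: "connected R" using R by (simp add: in_components_connected)
  have Rsub: "R \<subseteq> S2 - img h K" using R by (simp add: in_components_subset)
  define A where "A e u = (\<Union>w\<in>side VT ET e u. \<Delta>v w)" for e u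
  define P where "P e a b \<longleftrightarrow> (\<exists>U1 U2. components (S2 - img h (\<Delta>e e)) = {U1,U2} \<and> U1 \<noteq> U2 \<and>
      img h (A e a) \<subseteq> img h (\<Delta>e e) \<union> U1 \<and> img h (A e b) \<subseteq> img h (\<Delta>e e) \<union> U2 \<and> R \<subseteq> U1)"
    for e a b
  have Por: "P e a b \<or> P e b a" if eab: "e \<in> ET" "e = {a,b}" for e a b
  proof -
    obtain U1 U2 where U: "components (S2 - img h (\<Delta>e e)) = {U1,U2}" "U1 \<noteq> U2"
      "img h (A e a) = img h (\<Delta>e e) \<union> \<Union>{C \<in> components (img h K - img h (\<Delta>e e)). C \<subseteq> U1}"
      "img h (A e b) = img h (\<Delta>e e) \<union> \<Union>{C \<in> components (img h K - img h (\<Delta>e e)). C \<subseteq> U2}"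
    proof -
      have "strong_visual_decomposition h K (\<Delta>e e) (A e a) (A e b)"
        unfolding A_def by (rule decomp[rule_format, OF eab])
      then show ?thesis unfolding strong_visual_decomposition_def
        apply (elim conjE exE)
        apply (rule that)
           apply assumption+
        done
    qed
    have sub: "\<Delta>e e \<subseteq> K" using edge_cyc eab by (auto simp: induced_4cycle_def full_subcomplex_def)
    have RS: "R \<subseteq> S2 - img h (\<Delta>e e)" using Rsub realization_mono[OF sub] by auto
    then have x0': "x0 \<in> S2 - img h (\<Delta>e e)" using x0 by auto
    have "R \<subseteq> connected_component_set (S2 - img h (\<Delta>e e)) x0"
      using connected_component_maximal[OF x0 Rconn RS] .
    moreover have "connected_component_set (S2 - img h (\<Delta>e e)) x0 \<in> {U1,U2}"
      using componentsI[OF x0'] by (simp only: U(1))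
    moreover have "img h (A e a) \<subseteq> img h (\<Delta>e e) \<union> U1" using U(3) by blast
    moreover have "img h (A e b) \<subseteq> img h (\<Delta>e e) \<union> U2" using U(4) by blast
    ultimately have "(R \<subseteq> U1 \<or> R \<subseteq> U2) \<and> img h (A e a) \<subseteq> img h (\<Delta>e e) \<union> U1
       \<and> img h (A e b) \<subseteq> img h (\<Delta>e e) \<union> U2" by blast
    then show ?thesis
    proof (elim conjE disjE)
      assume "R \<subseteq> U1" "img h (A e a) \<subseteq> img h (\<Delta>e e) \<union> U1" "img h (A e b) \<subseteq> img h (\<Delta>e e) \<union> U2"
      then have "P e a b" unfolding P_def using U(1,2) by blast
      then show ?thesis by blast
    next
      assume "R \<subseteq> U2" "img h (A e a) \<subseteq> img h (\<Delta>e e) \<union> U1" "img h (A e b) \<subseteq> img h (\<Delta>e e) \<union> U2"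
      moreover have "components (S2 - img h (\<Delta>e e)) = {U2,U1}" using U(1) by (simp add: insert_commute)
      ultimately have "P e b a" unfolding P_def using U(2) by blast
      then show ?thesis by blast
    qed
  qed
  define bad where "bad e u \<longleftrightarrow> \<not>(\<exists>a b. e = {a,b} \<and> P e a b \<and> reach (ET - {e}) a u)" for e u
  have Tall: "finite VT \<and> VT \<noteq> {} \<and> (\<forall>e\<in>ET. \<exists>u w. e = {u, w} \<and> u \<noteq> w \<and> u \<in> VT \<and> w \<in> VT) \<and>
     (\<forall>u\<in>VT. \<forall>w\<in>VT. reach ET u w) \<and>
     (\<forall>e\<in>ET. \<forall>u w. e = {u, w} \<longrightarrow> \<not> reach (ET - {e}) u w)"
    using tree unfolding finite_tree_def .
  have T1: "finite VT" using Tall by (rule conjunct1)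
  have T2: "VT \<noteq> {}" using Tall by (elim conjE)
  have T3: "\<forall>e\<in>ET. \<exists>u w. e = {u, w} \<and> u \<noteq> w \<and> u \<in> VT \<and> w \<in> VT" using Tall by (elim conjE)
  have T4: "\<forall>u\<in>VT. \<forall>w\<in>VT. reach ET u w" using Tall by (elim conjE)
  have T5: "\<forall>e\<in>ET. \<forall>u w. e = {u, w} \<longrightarrow> \<not> reach (ET - {e}) u w" using Tall by (elim conjE)
  have ETsub: "ET \<subseteq> Pow VT"
  proof
    fix e assume "e \<in> ET"
    then obtain u w where "e = {u, w}" "u \<in> VT" "w \<in> VT" using T3 by blast
    then show "e \<in> Pow VT" by simp
  qed
  have finET: "finite ET" using T1 ETsub by (meson finite_Pow_iff finite_subset)
  define g where "g u = card {e\<in>ET. bad e u}" for u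
  obtain v0 where "v0 \<in> VT" using T2 by blast
  then obtain v where v: "v \<in> VT" "\<forall>u. u \<in> VT \<longrightarrow> g v \<le> g u"
    using ex_has_least_nat[of "\<lambda>u. u \<in> VT" v0 g] by blast
  have sink: "P {v,b} v b" if vbE: "{v,b} \<in> ET" for b
  proof -
    from T3 vbE obtain u w where uw: "{v,b} = {u,w}" "u \<noteq> w" "u \<in> VT" "w \<in> VT"
      by blast
    have vb: "v \<noteq> b" using uw by (auto simp: doubleton_eq_iff)
    have bVT: "b \<in> VT" using uw v by (auto simp: doubleton_eq_iff)
    have nreach: "\<not> reach (ET - {{v,b}}) b v"
      using T5 vbE by (metis insert_commute)
    have notbad: "\<not> bad {v,b} v"
    proof
      assume bd: "bad {v,b} v"
      have "{e\<in>ET. bad e b} \<subseteq> {e\<in>ET. bad e v} - {{v,b}}"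
      proof
        fix e assume e: "e \<in> {e\<in>ET. bad e b}"
        show "e \<in> {e\<in>ET. bad e v} - {{v,b}}"
        proof (cases "e = {v,b}")
          case True
          from Por[OF vbE refl] show ?thesis
          proof
            assume "P {v,b} v b" then have "\<not> bad {v,b} v" unfolding bad_def reach_def by blast
            with bd show ?thesis by blast
          next
            assume "P {v,b} b v"
            then have "\<not> bad {v,b} b" unfolding bad_def reach_def by (metis insert_commute rtranclp.rtrancl_refl)
            with e True show ?thesis by blast
          qed
        next
          case False
          have adj: "gadj (ET - {e}) v b" using False vbE vb by (auto simp: gadj_def)
          have "reach (ET - {e}) a v \<longleftrightarrow> reach (ET - {e}) a b" for a
          proof
            assume "reach (ET - {e}) a v" then show "reach (ET - {e}) a b"
              using adj unfolding reach_def by (meson rtranclp.rtrancl_into_rtrancl)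
          next
            assume "reach (ET - {e}) a b" then show "reach (ET - {e}) a v"
              using gadj_sym[OF adj] unfolding reach_def by (meson rtranclp.rtrancl_into_rtrancl)
          qed
          then have "bad e v \<longleftrightarrow> bad e b" unfolding bad_def by simp
          with e False show ?thesis by blast
        qed
      qed
      then have "g b \<le> card ({e\<in>ET. bad e v} - {{v,b}})"
        unfolding g_def using finET by (simp add: card_mono)
      also have "\<dots> < g v" unfolding g_def using finET bd vbE by (intro card_Diff1_less) auto
      finally show False using v bVT by force
    qed
    then obtain a c where ac: "{v,b} = {a,c}" "P {v,b} a c" "reach (ET - {{v,b}}) a v"
      unfolding bad_def by blast
    have "a \<noteq> b" using ac(3) nreach by blast
    then have "a = v" "c = b" using ac(1) vb by (auto simp: doubleton_eq_iff)
    then show ?thesis using ac(2) by simp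
  qed
  define R' where "R' = connected_component_set (S2 - img h (\<Delta>v v)) x0"
  have subv: "\<Delta>v v \<subseteq> K" using vert_cover v by blast
  have x0v: "x0 \<in> S2 - img h (\<Delta>v v)" using x0S realization_mono[OF subv] by auto
  have R'conn: "connected R'" unfolding R'_def by simp
  have R'sub: "R' \<subseteq> S2 - img h (\<Delta>v v)" unfolding R'_def by (rule connected_component_subset)
  have x0R': "x0 \<in> R'" unfolding R'_def using x0v by simp
  have disj: "R' \<inter> img h K = {}"
  proof (rule ccontr)
    assume "R' \<inter> img h K \<noteq> {}"
    then obtain y where y: "y \<in> R'" "y \<in> img h K" by blast
    have "img h K = (\<Union>w\<in>VT. img h (\<Delta>v w))"
      using vert_cover realization_UN[of \<Delta>v VT] by (metis image_UN)
    then obtain w where w: "w \<in> VT" "y \<in> img h (\<Delta>v w)" using y by blast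
    have yv: "y \<notin> img h (\<Delta>v v)" using R'sub y by blast
    then have wv: "w \<noteq> v" using w by blast
    have "reach ET v w" using T4 v(1) w(1) by blast
    then have "w = v \<or> (\<exists>b. gadj ET v b \<and> reach (ET - {{v,b}}) b w)" by (rule reach_first)
    then obtain b where b: "gadj ET v b" "reach (ET - {{v,b}}) b w"
      using wv by blast
    define e where "e = {v,b}"
    have eE: "e \<in> ET" using b unfolding e_def gadj_def by simp
    have bVT: "b \<in> VT" using eE ETsub unfolding e_def by blast
    from sink[OF eE[unfolded e_def]] obtain U1 U2 where U:
      "components (S2 - img h (\<Delta>e e)) = {U1,U2}" "U1 \<noteq> U2"
      "img h (A e b) \<subseteq> img h (\<Delta>e e) \<union> U2" "R \<subseteq> U1"
      unfolding P_def e_def by blast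
    have "w \<in> side VT ET e b" using w b unfolding side_def e_def by simp
    then have "\<Delta>v w \<subseteq> A e b" unfolding A_def by blast
    then have "y \<in> img h (\<Delta>e e) \<union> U2" using U(3) w realization_mono by blast
    moreover have sig: "\<Delta>e e = \<Delta>v v \<inter> \<Delta>v b" using endpoints v bVT eE unfolding e_def by blast
    have sigsub: "img h (\<Delta>e e) \<subseteq> img h (\<Delta>v v)" using realization_mono[of "\<Delta>e e" "\<Delta>v v"] sig by blast
    ultimately have yU2: "y \<in> U2" using yv by blast
    have U1c: "U1 \<in> components (S2 - img h (\<Delta>e e))" using U(1) by simp
    have U2c: "U2 \<in> components (S2 - img h (\<Delta>e e))" using U(1) by simp
    have "R' \<subseteq> U1"
      using components_maximal[OF U1c R'conn] R'sub sigsub x0R' x0 U(4) by blast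
    then have "y \<in> U1 \<inter> U2" using y yU2 by blast
    then show False using components_nonoverlap[OF U1c U2c] U(2) by blast
  qed
  have "R' \<subseteq> S2 - img h K" using disj R'sub by blast
  then have "R' \<subseteq> R" unfolding Req using connected_component_maximal[OF x0R' R'conn] by blast
  moreover have "R \<subseteq> R'" unfolding Req R'_def
    using realization_mono[OF subv] by (intro connected_component_mono) blast
  ultimately have "R = R'" by blast
  then have "R \<in> components (S2 - img h (\<Delta>v v))"
    unfolding R'_def using componentsI[OF x0v] by simp
  then show "\<exists>v\<in>VT. R \<in> components (S2 - img h (\<Delta>v v))" using v by blast
qed

end
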